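(* Consider MINTSS under the independent cascade (IC) model or the linear threshold (LT) model, with coverage threshold $\eta$ and shortfall $\epsilon>0$. For any $\phi>0$ there exists $\delta\in(0,1)$ such that, using $(1-\delta)$-approximate values of the coverage function $\sigma_m(\cdot)$ in place of its exact values, the greedy algorithm $\textsc{Greedy-Mintss}$ run with threshold $\eta-\epsilon$ approximates MINTSS within a factor of $(1+\phi)\cdot(1+\ln(\eta/\epsilon))$, i.e., the size (cost) of the seed set it returns is at most $(1+\phi)(1+\ln(\eta/\epsilon))$ times the minimum size (cost) of a seed set $S$ with $\sigma_m(S)\ge\eta$.
   Context: A social graph is a directed graph $G=(V,E)$. IC model: each arc $(v,u)$ has probability $p_{v,u}$; seed nodes are active at time $0$; when a node $v$ becomes active at time $t$, it gets one chance to activate each inactive out-neighbour $u$, succeeding independently with probability $p_{v,u}$, and then $u$ is active at time $t+1$; the process stops when no new node is activated. LT model: each arc $(v,u)$ has weight $b_{v,u}\ge 0$ with $\sum_v b_{v,u}\le 1$ for every $u$; each node $u$ draws a threshold $\theta_u$ uniformly from $[0,1]$; if at time $t$ the total weight from active in-neighbours of $u$ reaches $\theta_u$, $u$ becomes active at time $t+1$; nodes stay active. $\sigma_m(S)$ is the expected number of nodes eventually active when $S$ is the seed set. MINTSS: given $\eta\le|V|$ (and node costs $c:V\to\mathbb{R}^+$, unit costs in the unweighted case), find a seed set $S$ of minimum size (cost) with $\sigma_m(S)\ge\eta$. Algorithm $\textsc{Greedy-Mintss}$: start with $S=\emptyset$; while $\sigma_m(S)<\eta-\epsilon$, add to $S$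 a node $u$ maximizing $\frac{\min(\sigma_m(S\cup\{w\}),\eta)-\sigma_m(S)}{c(w)}$ over $w\in V\setminus S$. Using $(1-\delta)$-approximate values means replacing $\sigma_m$ throughout the algorithm by an estimate $\sigma'$ with $(1-\delta)\sigma_m(S)\le\sigma'(S)\le\sigma_m(S)$ for all $S$. *)

theory Defs
  imports "HOL-Probability.Probability"
begin

definition ic_instance :: "'a set \<Rightarrow> ('a \<times> 'a) set \<Rightarrow> ('a \<times> 'a \<Rightarrow> real) \<Rightarrow> bool" where
  "ic_instance V E p \<longleftrightarrow> finite V \<and> E \<subseteq> V \<times> V \<and> (\<forall>e\<in>E. 0 \<le> p e \<and> p e \<le> 1)"

text \<open>The IC diffusion process driven by the outcomes of the activation attempts:
  L is the set of arcs (v,u) whose (single) activation attempt succeeds, should it happen.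
  State at time t: (nodes active by time t, nodes newly activated at time t).\<close>
fun ic_state :: "'a set \<Rightarrow> ('a \<times> 'a) set \<Rightarrow> 'a set \<Rightarrow> nat \<Rightarrow> 'a set \<times> 'a set" where
  "ic_state V L S 0 = (S, S)"
| "ic_state V L S (Suc t) =
     (let (A, N) = ic_state V L S t;
          N' = {u \<in> V - A. \<exists>v\<in>N. (v, u) \<in> L}
      in (A \<union> N', N'))"

definition ic_final :: "'a set \<Rightarrow> ('a \<times> 'a) set \<Rightarrow> 'a set \<Rightarrow> 'a set" where
  "ic_final V L S = (\<Union>t. fst (ic_state V L S t))"

definition sigma_IC :: "'a set \<Rightarrow> ('a \<times> 'a) set \<Rightarrow> ('a \<times> 'a \<Rightarrow> real) \<Rightarrow> 'a set \<Rightarrow> real" where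
  "sigma_IC V E p S =
     measure_pmf.expectation (Pi_pmf E False (\<lambda>e. bernoulli_pmf (p e)))
       (\<lambda>X. real (card (ic_final V {e \<in> E. X e} S)))"

definition lt_instance :: "'a set \<Rightarrow> ('a \<times> 'a) set \<Rightarrow> ('a \<times> 'a \<Rightarrow> real) \<Rightarrow> bool" where
  "lt_instance V E b \<longleftrightarrow> finite V \<and> E \<subseteq> V \<times> V \<and> (\<forall>e\<in>E. 0 \<le> b e)
      \<and> (\<forall>u\<in>V. (\<Sum>v\<in>{v. (v, u) \<in> E}. b (v, u)) \<le> 1)"

fun lt_active :: "'a set \<Rightarrow> ('a \<times> 'a) set \<Rightarrow> ('a \<times> 'a \<Rightarrow> real) \<Rightarrow> ('a \<Rightarrow> real) \<Rightarrow> 'a set \<Rightarrow> nat \<Rightarrow> 'a set" where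
  "lt_active V E b \<theta> S 0 = S"
| "lt_active V E b \<theta> S (Suc t) =
     (let A = lt_active V E b \<theta> S t
      in A \<union> {u \<in> V. (\<Sum>v\<in>{v \<in> A. (v, u) \<in> E}. b (v, u)) \<ge> \<theta> u})"

definition lt_final :: "'a set \<Rightarrow> ('a \<times> 'a) set \<Rightarrow> ('a \<times> 'a \<Rightarrow> real) \<Rightarrow> ('a \<Rightarrow> real) \<Rightarrow> 'a set \<Rightarrow> 'a set" where
  "lt_final V E b \<theta> S = (\<Union>t. lt_active V E b \<theta> S t)"

definition sigma_LT :: "'a set \<Rightarrow> ('a \<times> 'a) set \<Rightarrow> ('a \<times> 'a \<Rightarrow> real) \<Rightarrow> 'a set \<Rightarrow> real" where
  "sigma_LT V E b S =
     integral\<^sup>L (PiM V (\<lambda>_. uniform_measure lborel {0..1::real}))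
       (\<lambda>\<theta>. real (card (lt_final V E b \<theta> S)))"

definition set_cost :: "('a \<Rightarrow> real) \<Rightarrow> 'a set \<Rightarrow> real" where
  "set_cost c S = (\<Sum>v\<in>S. c v)"

text \<open>Seed sets reachable by some execution of the greedy loop (ties broken arbitrarily).\<close>
inductive greedy_reach :: "'a set \<Rightarrow> ('a set \<Rightarrow> real) \<Rightarrow> ('a \<Rightarrow> real) \<Rightarrow> real \<Rightarrow> real \<Rightarrow> 'a set \<Rightarrow> bool"
  for V f c \<eta> \<epsilon> where
  start: "greedy_reach V f c \<eta> \<epsilon> {}"
| step: "greedy_reach V f c \<eta> \<epsilon> S \<Longrightarrow> f S < \<eta> - \<epsilon> \<Longrightarrow> u \<in> V - S \<Longrightarrow>
     (\<forall>w\<in>V - S. (min (f (S \<union> {w})) \<eta> - f S) / c w \<le> (min (f (S \<union> {u})) \<eta> - f S) / c u) \<Longrightarrow>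
     greedy_reach V f c \<eta> \<epsilon> (S \<union> {u})"

definition greedy_output :: "'a set \<Rightarrow> ('a set \<Rightarrow> real) \<Rightarrow> ('a \<Rightarrow> real) \<Rightarrow> real \<Rightarrow> real \<Rightarrow> 'a set \<Rightarrow> bool" where
  "greedy_output V f c \<eta> \<epsilon> S \<longleftrightarrow> greedy_reach V f c \<eta> \<epsilon> S \<and> \<not> (f S < \<eta> - \<epsilon>)"

end

theory Submission
  imports Defs
begin


definition good_sigma :: "'a set \<Rightarrow> ('a set \<Rightarrow> real) \<Rightarrow> bool" where
 "good_sigma V \<sigma> \<longleftrightarrow> finite V \<and> (\<forall>S\<subseteq>V. 0 \<le> \<sigma> S) \<and> real (card V) \<le> \<sigma> V
   \<and> (\<forall>A B. A \<subseteq> B \<longrightarrow> B \<subseteq> V \<longrightarrow> \<sigma> A \<le> \<sigma> B)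
   \<and> (\<forall>A B y. A \<subseteq> B \<longrightarrow> B \<subseteq> V \<longrightarrow> y \<in> V \<longrightarrow> \<sigma> (B \<union> {y}) - \<sigma> B \<le> \<sigma> (A \<union> {y}) - \<sigma> A)"

definition ratio :: "('a set \<Rightarrow> real) \<Rightarrow> ('a \<Rightarrow> real) \<Rightarrow> real \<Rightarrow> 'a set \<Rightarrow> 'a \<Rightarrow> real" where
  "ratio f c \<eta> S w = (min (f (S \<union> {w})) \<eta> - f S) / c w"

lemma gs_sum_bound:
  assumes g: "good_sigma V \<sigma>" and S: "S \<subseteq> V" and T: "T \<subseteq> V"
  shows "\<sigma> (S \<union> T) - \<sigma> S \<le> (\<Sum>w\<in>T. \<sigma> (S \<union> {w}) - \<sigma> S)"
proof -
  have fin: "finite T" using g T unfolding good_sigma_def by (auto intro: finite_subset)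
  from fin T show ?thesis
  proof (induction T rule: finite_induct)
    case empty then show ?case by simp
  next
    case (insert a T0)
    have sub: "\<sigma> (S \<union> T0 \<union> {a}) - \<sigma> (S \<union> T0) \<le> \<sigma> (S \<union> {a}) - \<sigma> S"
      using g insert.prems S unfolding good_sigma_def by auto
    have e: "S \<union> insert a T0 = S \<union> T0 \<union> {a}" by auto
    have "\<sigma> (S \<union> T0) - \<sigma> S \<le> (\<Sum>w\<in>T0. \<sigma> (S \<union> {w}) - \<sigma> S)" using insert by auto
    then show ?case using insert(1,2) sub e by (simp add: sum.insert)
  qed
qed

lemma gs_step:
  assumes g: "good_sigma V \<sigma>" and cpos: "\<forall>v\<in>V. c v > 0"
    and S: "S \<subseteq> V" and T: "T \<subseteq> V" and hT: "\<eta> \<le> \<sigma> T" and hS: "\<sigma> S < \<eta>"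
  shows "set_cost c T > 0 \<and> (\<exists>w\<in>V - S. (\<eta> - \<sigma> S) / set_cost c T \<le> ratio \<sigma> c \<eta> S w)"
proof -
  have finV: "finite V" using g unfolding good_sigma_def by auto
  have finT: "finite T" using finV T by (auto intro: finite_subset)
  have mono: "\<And>A B. A \<subseteq> B \<Longrightarrow> B \<subseteq> V \<Longrightarrow> \<sigma> A \<le> \<sigma> B" using g unfolding good_sigma_def by auto
  have Tne: "T \<noteq> {}"
  proof
    assume "T = {}"
    then have "\<sigma> {} \<ge> \<eta>" using hT by simp
    moreover have "\<sigma> {} \<le> \<sigma> S" using mono S by auto
    ultimately show False using hS by simp
  qed
  define C where "C = set_cost c T"
  have cT: "\<forall>w\<in>T. c w > 0" using cpos T by auto
  have Cpos: "C > 0" unfolding C_def set_cost_def using finT Tne cT by (intro sum_pos) auto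
  define d where "d = \<eta> - \<sigma> S"
  have dpos: "d > 0" using hS d_def by simp
  have cle: "\<And>w. w \<in> T \<Longrightarrow> c w \<le> C"
    unfolding C_def set_cost_def using finT cT by (intro member_le_sum) auto
  have "\<exists>w\<in>V - S. d / C \<le> ratio \<sigma> c \<eta> S w"
  proof (cases "\<exists>w\<in>T. \<sigma> (S \<union> {w}) - \<sigma> S \<ge> d")
    case True
    then obtain w where w: "w \<in> T" "\<sigma> (S \<union> {w}) - \<sigma> S \<ge> d" by blast
    have wS: "w \<notin> S"
    proof
      assume "w \<in> S" then have "S \<union> {w} = S" by auto
      then show False using w dpos by simp
    qed
    have "min (\<sigma> (S \<union> {w})) \<eta> = \<eta>" using w d_def by simp
    then have r: "ratio \<sigma> c \<eta> S w = d / c w" unfolding ratio_def d_def by simp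
    have "d / C \<le> d / c w" using dpos cT w(1) cle[OF w(1)] by (intro divide_left_mono) auto
    then show ?thesis using r w(1) wS T by (intro bexI[of _ w]) auto
  next
    case False
    show ?thesis
    proof (rule ccontr)
      assume nex: "\<not> (\<exists>w\<in>V - S. d / C \<le> ratio \<sigma> c \<eta> S w)"
      have lt: "\<sigma> (S \<union> {w}) - \<sigma> S < c w * d / C" if wT: "w \<in> T" for w
      proof (cases "w \<in> S")
        case True
        then have "S \<union> {w} = S" by auto
        then show ?thesis using cT wT dpos Cpos by simp
      next
        case False
        have "\<sigma> (S \<union> {w}) < \<eta>" using \<open>\<not> (\<exists>w\<in>T. d \<le> \<sigma> (S \<union> {w}) - \<sigma> S)\<close> wT d_def by auto
        then have r: "ratio \<sigma> c \<eta> S w = (\<sigma> (S \<union> {w}) - \<sigma> S) / c w" unfolding ratio_def by simp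
        have "w \<in> V - S" using False wT T by auto
        then have "ratio \<sigma> c \<eta> S w < d / C" using nex by (meson not_le)
        then have "(\<sigma> (S \<union> {w}) - \<sigma> S) / c w < d / C" using r by simp
        then show ?thesis using cT wT Cpos by (simp add: field_simps)
      qed
      have "(\<Sum>w\<in>T. \<sigma> (S \<union> {w}) - \<sigma> S) < (\<Sum>w\<in>T. c w * d / C)"
        using finT Tne lt by (intro sum_strict_mono) auto
      also have "(\<Sum>w\<in>T. c w * d / C) = C * d / C"
        unfolding C_def set_cost_def by (simp add: sum_distrib_right sum_divide_distrib)
      also have "\<dots> = d" using Cpos by simp
      finally have s1: "(\<Sum>w\<in>T. \<sigma> (S \<union> {w}) - \<sigma> S) < d" .
      have "\<sigma> (S \<union> T) - \<sigma> S \<le> (\<Sum>w\<in>T. \<sigma> (S \<union> {w}) - \<sigma> S)" using gs_sum_bound[OF g S T] .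
      moreover have "\<sigma> T \<le> \<sigma> (S \<union> T)" using mono S T by auto
      ultimately show False using s1 hT d_def by simp
    qed
  qed
  then show ?thesis using Cpos unfolding C_def d_def by auto
qed

lemma min_diff_le: "\<bar>min (a::real) e - min b e\<bar> \<le> \<bar>a - b\<bar>"
  by (auto simp: min_def abs_le_iff)

lemma delta_exists:
  assumes g: "good_sigma V \<sigma>" and cpos: "\<forall>v\<in>V. c v > 0" and Vne: "V \<noteq> {}"
    and eps: "0 < \<epsilon>" "\<epsilon> < \<eta>"
  shows "\<exists>\<delta>. 0 < \<delta> \<and> \<delta> < 1 \<and> (\<forall>S\<subseteq>V. \<eta> - \<epsilon> < \<sigma> S \<longrightarrow> \<eta> - \<epsilon> < (1 - \<delta>) * \<sigma> S)
      \<and> (\<forall>\<sigma>'. (\<forall>S\<subseteq>V. (1-\<delta>)*\<sigma> S \<le> \<sigma>' S \<and> \<sigma>' S \<le> \<sigma> S) \<longrightarrow>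
           (\<forall>S u. S \<subseteq> V \<longrightarrow> u \<in> V - S \<longrightarrow> (\<forall>w\<in>V-S. ratio \<sigma>' c \<eta> S w \<le> ratio \<sigma>' c \<eta> S u) \<longrightarrow>
                (\<forall>w\<in>V-S. ratio \<sigma> c \<eta> S w \<le> ratio \<sigma> c \<eta> S u)))"
proof -
  have finV: "finite V" using g good_sigma_def by auto
  have s0: "\<And>S. S \<subseteq> V \<Longrightarrow> 0 \<le> \<sigma> S" using g unfolding good_sigma_def by auto
  define P where "P = Pow V"
  have finP: "finite P" using finV P_def by simp
  define Zs where "Zs = (\<lambda>S. (\<sigma> S - (\<eta> - \<epsilon>)) / \<sigma> S) ` {S\<in>P. \<eta> - \<epsilon> < \<sigma> S}"
  define \<delta>1 where "\<delta>1 = (if Zs = {} then 1 else Min Zs)"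
  have finZ: "finite Zs" unfolding Zs_def using finP by simp
  have Zpos: "\<forall>z\<in>Zs. z > 0" unfolding Zs_def using eps by auto
  have d1pos: "\<delta>1 > 0" unfolding \<delta>1_def using finZ Zpos by auto
  have d1le: "\<And>S. S \<subseteq> V \<Longrightarrow> \<eta> - \<epsilon> < \<sigma> S \<Longrightarrow> \<delta>1 \<le> (\<sigma> S - (\<eta> - \<epsilon>)) / \<sigma> S"
  proof -
    fix S assume "S \<subseteq> V" "\<eta> - \<epsilon> < \<sigma> S"
    then have "(\<sigma> S - (\<eta> - \<epsilon>)) / \<sigma> S \<in> Zs" unfolding Zs_def P_def by auto
    then show "\<delta>1 \<le> (\<sigma> S - (\<eta> - \<epsilon>)) / \<sigma> S" unfolding \<delta>1_def using finZ by auto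
  qed
  define Rs where "Rs = (\<lambda>(S,w). ratio \<sigma> c \<eta> S w) ` (P \<times> V)"
  have finR: "finite Rs" unfolding Rs_def using finP finV by simp
  define Ds where "Ds = (\<lambda>(a,b). b - a) ` {(a,b). a \<in> Rs \<and> b \<in> Rs \<and> a < b}"
  have "{(a,b). a \<in> Rs \<and> b \<in> Rs \<and> a < b} \<subseteq> Rs \<times> Rs" by auto
  then have finD: "finite Ds" unfolding Ds_def using finR by (meson finite_SigmaI finite_imageI finite_subset)
  define G where "G = (if Ds = {} then 1 else Min Ds)"
  have Dpos: "\<forall>x\<in>Ds. x > 0" unfolding Ds_def by auto
  have Gpos: "G > 0" unfolding G_def using finD Dpos by auto
  have Gle: "\<And>a b. a \<in> Rs \<Longrightarrow> b \<in> Rs \<Longrightarrow> a < b \<Longrightarrow> G \<le> b - a"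
  proof -
    fix a b assume "a \<in> Rs" "b \<in> Rs" "a < b"
    then have "b - a \<in> Ds" unfolding Ds_def by force
    then show "G \<le> b - a" unfolding G_def using finD by auto
  qed
  define M where "M = Max (\<sigma> ` P)"
  have Mge: "\<And>S. S \<subseteq> V \<Longrightarrow> \<sigma> S \<le> M" unfolding M_def P_def using finP P_def by auto
  have M0: "M \<ge> 0" using Mge[of "{}"] s0[of "{}"] by simp
  define cm where "cm = Min (c ` V)"
  have cmpos: "cm > 0" unfolding cm_def using finV Vne cpos by auto
  have cmle: "\<And>w. w \<in> V \<Longrightarrow> cm \<le> c w" unfolding cm_def using finV by auto
  define \<delta> where "\<delta> = min (1/2) (min (\<delta>1/2) (G*cm/(8*(M+1))))"
  have dpos: "\<delta> > 0" unfolding \<delta>_def using d1pos Gpos cmpos M0 by auto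
  have dlt1: "\<delta> < 1" unfolding \<delta>_def by auto
  have dd1: "\<delta> < \<delta>1" unfolding \<delta>_def using d1pos by auto
  have dG: "\<delta> \<le> G*cm/(8*(M+1))" unfolding \<delta>_def by auto
  have dG2: "8 * (\<delta> * M) \<le> G * cm"
  proof -
    have "\<delta> * (8*(M+1)) \<le> G*cm" using dG M0 by (simp add: pos_le_divide_eq)
    moreover have "8 * (\<delta> * M) \<le> \<delta> * (8*(M+1))" using dpos M0 by (simp add: algebra_simps)
    ultimately show ?thesis by linarith
  qed
  have claimT: "\<forall>S\<subseteq>V. \<eta> - \<epsilon> < \<sigma> S \<longrightarrow> \<eta> - \<epsilon> < (1 - \<delta>) * \<sigma> S"
  proof (intro allI impI)
    fix S assume S: "S \<subseteq> V" and h: "\<eta> - \<epsilon> < \<sigma> S"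
    have sp: "\<sigma> S > 0" using h eps by simp
    have "\<delta> < (\<sigma> S - (\<eta> - \<epsilon>)) / \<sigma> S" using dd1 d1le[OF S h] by simp
    then have "\<delta> * \<sigma> S < \<sigma> S - (\<eta> - \<epsilon>)" using sp by (simp add: pos_less_divide_eq)
    then show "\<eta> - \<epsilon> < (1 - \<delta>) * \<sigma> S" by (simp add: algebra_simps)
  qed
  have claimR: "\<forall>\<sigma>'. (\<forall>S\<subseteq>V. (1-\<delta>)*\<sigma> S \<le> \<sigma>' S \<and> \<sigma>' S \<le> \<sigma> S) \<longrightarrow>
           (\<forall>S u. S \<subseteq> V \<longrightarrow> u \<in> V - S \<longrightarrow> (\<forall>w\<in>V-S. ratio \<sigma>' c \<eta> S w \<le> ratio \<sigma>' c \<eta> S u) \<longrightarrow>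
                (\<forall>w\<in>V-S. ratio \<sigma> c \<eta> S w \<le> ratio \<sigma> c \<eta> S u))"
  proof (intro allI impI ballI)
    fix \<sigma>' S u w
    assume w': "\<forall>S\<subseteq>V. (1-\<delta>)*\<sigma> S \<le> \<sigma>' S \<and> \<sigma>' S \<le> \<sigma> S" and S: "S \<subseteq> V" and u: "u \<in> V - S"
      and mx: "\<forall>w\<in>V-S. ratio \<sigma>' c \<eta> S w \<le> ratio \<sigma>' c \<eta> S u" and w: "w \<in> V - S"
    have e1: "\<bar>\<sigma>' X - \<sigma> X\<bar> \<le> \<delta> * M" if X: "X \<subseteq> V" for X
    proof -
      have "\<sigma> X - \<sigma>' X \<le> \<delta> * \<sigma> X" using w'[rule_format, OF X] by (simp add: algebra_simps)
      also have "\<dots> \<le> \<delta> * M" using Mge[OF X] dpos by simp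
      finally show ?thesis using w'[rule_format, OF X] by simp
    qed
    have err: "\<bar>ratio \<sigma>' c \<eta> S x - ratio \<sigma> c \<eta> S x\<bar> < G/2" if x: "x \<in> V" for x
    proof -
      have Sx: "S \<union> {x} \<subseteq> V" using S x by auto
      have n1: "\<bar>min (\<sigma>' (S \<union> {x})) \<eta> - min (\<sigma> (S \<union> {x})) \<eta>\<bar> \<le> \<delta> * M"
        using min_diff_le e1[OF Sx] by (meson order_trans)
      have n2: "\<bar>(min (\<sigma>' (S \<union> {x})) \<eta> - \<sigma>' S) - (min (\<sigma> (S \<union> {x})) \<eta> - \<sigma> S)\<bar> \<le> 2 * (\<delta> * M)"
        using n1 e1[OF S] by linarith
      have cx: "c x > 0" "cm \<le> c x" using cpos x cmle by auto
      have "ratio \<sigma>' c \<eta> S x - ratio \<sigma> c \<eta> S x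
          = ((min (\<sigma>' (S \<union> {x})) \<eta> - \<sigma>' S) - (min (\<sigma> (S \<union> {x})) \<eta> - \<sigma> S)) / c x"
        unfolding ratio_def by (simp add: diff_divide_distrib)
      then have "\<bar>ratio \<sigma>' c \<eta> S x - ratio \<sigma> c \<eta> S x\<bar>
          = \<bar>(min (\<sigma>' (S \<union> {x})) \<eta> - \<sigma>' S) - (min (\<sigma> (S \<union> {x})) \<eta> - \<sigma> S)\<bar> / c x"
        using cx by simp
      also have "\<dots> \<le> 2 * (\<delta> * M) / c x" using n2 cx by (simp add: divide_right_mono)
      also have "\<dots> \<le> 2 * (\<delta> * M) / cm" using cx cmpos dpos M0 by (intro divide_left_mono) auto
      also have "\<dots> \<le> G / 4" using dG2 cmpos by (simp add: pos_divide_le_eq)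
      also have "\<dots> < G / 2" using Gpos by simp
      finally show ?thesis .
    qed
    show "ratio \<sigma> c \<eta> S w \<le> ratio \<sigma> c \<eta> S u"
    proof (rule ccontr)
      assume "\<not> ?thesis"
      then have lt: "ratio \<sigma> c \<eta> S u < ratio \<sigma> c \<eta> S w" by simp
      have inR: "ratio \<sigma> c \<eta> S u \<in> Rs" "ratio \<sigma> c \<eta> S w \<in> Rs"
        unfolding Rs_def P_def using S u w by force+
      have "G \<le> ratio \<sigma> c \<eta> S w - ratio \<sigma> c \<eta> S u" using Gle[OF inR lt] .
      moreover have "\<bar>ratio \<sigma>' c \<eta> S u - ratio \<sigma> c \<eta> S u\<bar> < G/2" using err u by auto
      moreover have "\<bar>ratio \<sigma>' c \<eta> S w - ratio \<sigma> c \<eta> S w\<bar> < G/2" using err w by auto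
      moreover have "ratio \<sigma>' c \<eta> S w \<le> ratio \<sigma>' c \<eta> S u" using mx w by auto
      ultimately show False by linarith
    qed
  qed
  show ?thesis using dpos dlt1 claimT claimR by blast
qed

lemma greedy_abstract:
  assumes g: "good_sigma V \<sigma>" and cpos: "\<forall>v\<in>V. c v > 0" and eta_le: "\<eta> \<le> real (card V)"
    and eps_pos: "0 < \<epsilon>" and eps_lt: "\<epsilon> < \<eta>" and phi: "\<phi> > 0"
  shows "\<exists>\<delta>. 0 < \<delta> \<and> \<delta> < 1 \<and>
    (\<forall>\<sigma>' :: 'a set \<Rightarrow> real.
       (\<forall>S\<subseteq>V. (1 - \<delta>) * \<sigma> S \<le> \<sigma>' S \<and> \<sigma>' S \<le> \<sigma> S) \<longrightarrow>
       (\<exists>S. greedy_output V \<sigma>' c \<eta> \<epsilon> S) \<and>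
       (\<forall>S T. greedy_output V \<sigma>' c \<eta> \<epsilon> S \<longrightarrow> T \<subseteq> V \<longrightarrow> \<sigma> T \<ge> \<eta> \<longrightarrow>
          set_cost c S \<le> (1 + \<phi>) * (1 + ln (\<eta> / \<epsilon>)) * set_cost c T))"
proof -
  have finV: "finite V" using g unfolding good_sigma_def by auto
  have s0: "\<And>S. S \<subseteq> V \<Longrightarrow> 0 \<le> \<sigma> S" using g unfolding good_sigma_def by auto
  have sV: "real (card V) \<le> \<sigma> V" using g unfolding good_sigma_def by auto
  have Vne: "V \<noteq> {}" using eta_le eps_pos eps_lt by auto
  obtain \<delta> where d: "0 < \<delta>" "\<delta> < 1"
    and dT: "\<forall>S\<subseteq>V. \<eta> - \<epsilon> < \<sigma> S \<longrightarrow> \<eta> - \<epsilon> < (1 - \<delta>) * \<sigma> S"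
    and dR: "\<forall>\<sigma>'. (\<forall>S\<subseteq>V. (1-\<delta>)*\<sigma> S \<le> \<sigma>' S \<and> \<sigma>' S \<le> \<sigma> S) \<longrightarrow>
           (\<forall>S u. S \<subseteq> V \<longrightarrow> u \<in> V - S \<longrightarrow> (\<forall>w\<in>V-S. ratio \<sigma>' c \<eta> S w \<le> ratio \<sigma>' c \<eta> S u) \<longrightarrow>
                (\<forall>w\<in>V-S. ratio \<sigma> c \<eta> S w \<le> ratio \<sigma> c \<eta> S u))"
    using delta_exists[OF g cpos Vne eps_pos eps_lt] by blast
  have main: "(\<exists>S. greedy_output V \<sigma>' c \<eta> \<epsilon> S) \<and>
       (\<forall>S T. greedy_output V \<sigma>' c \<eta> \<epsilon> S \<longrightarrow> T \<subseteq> V \<longrightarrow> \<sigma> T \<ge> \<eta> \<longrightarrow>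
          set_cost c S \<le> (1 + \<phi>) * (1 + ln (\<eta> / \<epsilon>)) * set_cost c T)"
    if w: "\<forall>S\<subseteq>V. (1 - \<delta>) * \<sigma> S \<le> \<sigma>' S \<and> \<sigma>' S \<le> \<sigma> S" for \<sigma>'
  proof -
    have stopT: "\<sigma> S \<le> \<eta> - \<epsilon>" if SV: "S \<subseteq> V" and lt: "\<sigma>' S < \<eta> - \<epsilon>" for S
    proof (rule ccontr)
      assume "\<not> \<sigma> S \<le> \<eta> - \<epsilon>"
      then have "\<eta> - \<epsilon> < \<sigma> S" by simp
      then have "\<eta> - \<epsilon> < (1 - \<delta>) * \<sigma> S" using dT SV by blast
      moreover have "(1 - \<delta>) * \<sigma> S \<le> \<sigma>' S" using w SV by blast
      ultimately show False using lt by linarith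
    qed
    have maxT: "\<And>S u. S \<subseteq> V \<Longrightarrow> u \<in> V - S \<Longrightarrow> (\<forall>w\<in>V-S. ratio \<sigma>' c \<eta> S w \<le> ratio \<sigma>' c \<eta> S u) \<Longrightarrow>
                (\<forall>w\<in>V-S. ratio \<sigma> c \<eta> S w \<le> ratio \<sigma> c \<eta> S u)"
      using dR w by blast
    have reachV: "S \<subseteq> V" if "greedy_reach V \<sigma>' c \<eta> \<epsilon> S" for S
      using that by (induction rule: greedy_reach.induct) auto
    have Vstop: "\<not> \<sigma>' V < \<eta> - \<epsilon>"
    proof -
      have "\<eta> - \<epsilon> < \<sigma> V" using sV eta_le eps_pos by linarith
      then have "\<eta> - \<epsilon> < (1 - \<delta>) * \<sigma> V" using dT by blast
      moreover have "(1 - \<delta>) * \<sigma> V \<le> \<sigma>' V" using w by blast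
      ultimately show ?thesis by linarith
    qed
    have ex: "\<forall>S. greedy_reach V \<sigma>' c \<eta> \<epsilon> S \<longrightarrow> card (V - S) = n \<longrightarrow> (\<exists>S'. greedy_output V \<sigma>' c \<eta> \<epsilon> S')" for n
    proof (induction n rule: less_induct)
      case (less n)
      show ?case
      proof (intro allI impI)
        fix S assume r: "greedy_reach V \<sigma>' c \<eta> \<epsilon> S" and cn: "card (V - S) = n"
        show "\<exists>S'. greedy_output V \<sigma>' c \<eta> \<epsilon> S'"
        proof (cases "\<sigma>' S < \<eta> - \<epsilon>")
          case False then show ?thesis using r greedy_output_def by blast
        next
          case True
          have SV: "S \<subseteq> V" using reachV r .
          have "S \<noteq> V" using True Vstop by auto
          then have ne: "V - S \<noteq> {}" using SV by auto
          have finD: "finite (V - S)" using finV by simp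
          define m where "m = Max ((ratio \<sigma>' c \<eta> S) ` (V - S))"
          have "m \<in> (ratio \<sigma>' c \<eta> S) ` (V - S)" unfolding m_def using finD ne by simp
          then obtain u where u: "u \<in> V - S" "ratio \<sigma>' c \<eta> S u = m" by blast
          have umax: "\<forall>w\<in>V-S. ratio \<sigma>' c \<eta> S w \<le> ratio \<sigma>' c \<eta> S u"
            using u finD unfolding m_def by auto
          have r2: "greedy_reach V \<sigma>' c \<eta> \<epsilon> (S \<union> {u})"
            using greedy_reach.step[OF r True u(1)] umax unfolding ratio_def by blast
          have "V - (S \<union> {u}) = (V - S) - {u}" by auto
          then have "card (V - (S \<union> {u})) = card (V - S) - 1" using u(1) finD by simp
          moreover have "card (V - S) > 0" using finD ne by (simp add: card_gt_0_iff)
          ultimately have "card (V - (S \<union> {u})) < n" using cn by simp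
          then show ?thesis using less.IH r2 by blast
        qed
      qed
    qed
    have part1: "\<exists>S. greedy_output V \<sigma>' c \<eta> \<epsilon> S" using ex greedy_reach.start by blast
    have part2: "set_cost c S \<le> (1 + \<phi>) * (1 + ln (\<eta> / \<epsilon>)) * set_cost c T"
      if out: "greedy_output V \<sigma>' c \<eta> \<epsilon> S" and T: "T \<subseteq> V" and hT: "\<sigma> T \<ge> \<eta>" for S T
    proof -
      define C where "C = set_cost c T"
      have Cge: "C \<ge> 0" unfolding C_def set_cost_def using cpos T by (intro sum_nonneg) (auto intro: less_imp_le)
      have q1: "\<eta> / \<epsilon> > 1" using eps_pos eps_lt by simp
      then have lnpos: "ln (\<eta> / \<epsilon>) > 0" by simp
      have goodstep: "C > 0 \<and> (\<eta> - \<sigma> S0) / C \<le> ratio \<sigma> c \<eta> S0 u"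
        if r: "greedy_reach V \<sigma>' c \<eta> \<epsilon> S0" and lt: "\<sigma>' S0 < \<eta> - \<epsilon>" and u: "u \<in> V - S0"
          and mx: "\<forall>w\<in>V - S0. ratio \<sigma>' c \<eta> S0 w \<le> ratio \<sigma>' c \<eta> S0 u" for S0 u
      proof -
        have SV: "S0 \<subseteq> V" using reachV r .
        have "\<sigma> S0 \<le> \<eta> - \<epsilon>" using stopT SV lt by blast
        then have "\<sigma> S0 < \<eta>" using eps_pos by simp
        from gs_step[OF g cpos SV T hT this] obtain w where
          Cp: "C > 0" and w: "w \<in> V - S0" "(\<eta> - \<sigma> S0) / C \<le> ratio \<sigma> c \<eta> S0 w"
          unfolding C_def by blast
        have "ratio \<sigma> c \<eta> S0 w \<le> ratio \<sigma> c \<eta> S0 u" using maxT[OF SV u mx] w(1) by blast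
        then show ?thesis using Cp w by simp
      qed
      have inv: "C > 0 \<longrightarrow> \<eta> - \<sigma> S1 \<le> \<eta> * exp (- set_cost c S1 / C)"
        if "greedy_reach V \<sigma>' c \<eta> \<epsilon> S1" for S1
        using that
      proof (induction rule: greedy_reach.induct)
        case start
        then show ?case using s0[of "{}"] by (simp add: set_cost_def)
      next
        case (step S0 u)
        show ?case
        proof
          assume Cp: "C > 0"
          have mx: "\<forall>w\<in>V - S0. ratio \<sigma>' c \<eta> S0 w \<le> ratio \<sigma>' c \<eta> S0 u"
            using step.hyps(4) unfolding ratio_def by blast
          have gs: "(\<eta> - \<sigma> S0) / C \<le> ratio \<sigma> c \<eta> S0 u"
            using goodstep[OF step.hyps(1) step.hyps(2) step.hyps(3) mx] by blast
          have SV: "S0 \<subseteq> V" using reachV step.hyps(1) .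
          define d where "d = \<eta> - \<sigma> S0"
          have dpos: "d \<ge> \<epsilon>" using stopT[OF SV step.hyps(2)] d_def by simp
          have cu: "c u > 0" using cpos step.hyps(3) by auto
          have "d / C * c u \<le> min (\<sigma> (S0 \<union> {u})) \<eta> - \<sigma> S0"
            using gs cu unfolding ratio_def d_def by (simp add: pos_le_divide_eq)
          then have "\<eta> - \<sigma> (S0 \<union> {u}) \<le> d - d / C * c u" unfolding d_def by linarith
          also have "\<dots> = d * (1 - c u / C)" by (simp add: algebra_simps)
          also have "\<dots> \<le> d * exp (- (c u / C))"
            using dpos eps_pos exp_minus_ge[of "c u / C"] by (intro mult_left_mono) auto
          also have "\<dots> \<le> \<eta> * exp (- set_cost c S0 / C) * exp (- (c u / C))"
            using step.IH Cp unfolding d_def by (intro mult_right_mono) auto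
          also have "\<dots> = \<eta> * exp (- (set_cost c S0 + c u) / C)"
            by (simp add: exp_add[symmetric] add_divide_distrib diff_divide_distrib)
          also have "set_cost c S0 + c u = set_cost c (S0 \<union> {u})"
          proof -
            have "finite S0" using SV finV by (auto intro: finite_subset)
            then show ?thesis unfolding set_cost_def using step.hyps(3) by simp
          qed
          finally show "\<eta> - \<sigma> (S0 \<union> {u}) \<le> \<eta> * exp (- set_cost c (S0 \<union> {u}) / C)" .
        qed
      qed
      have fac: "0 \<le> (1 + \<phi>) * (1 + ln (\<eta> / \<epsilon>))" using phi lnpos by simp
      have r: "greedy_reach V \<sigma>' c \<eta> \<epsilon> S" and nl: "\<not> \<sigma>' S < \<eta> - \<epsilon>" using out unfolding greedy_output_def by auto
      from r show ?thesis
      proof (cases rule: greedy_reach.cases)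
        case start
        then show ?thesis using fac Cge unfolding C_def by (simp add: set_cost_def)
      next
        case (step S0 u)
        have mx: "\<forall>w\<in>V - S0. ratio \<sigma>' c \<eta> S0 w \<le> ratio \<sigma>' c \<eta> S0 u"
          using step(5) unfolding ratio_def by blast
        have gs: "C > 0" "(\<eta> - \<sigma> S0) / C \<le> ratio \<sigma> c \<eta> S0 u"
          using goodstep[OF step(2) step(3) step(4) mx] by blast+
        have SV: "S0 \<subseteq> V" using reachV step(2) .
        define d where "d = \<eta> - \<sigma> S0"
        have dge: "d \<ge> \<epsilon>" using stopT[OF SV step(3)] d_def by simp
        have cu: "c u > 0" using cpos step(4) by auto
        have "ratio \<sigma> c \<eta> S0 u \<le> d / c u" unfolding ratio_def d_def using cu
          by (intro divide_right_mono) auto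
        then have "d / C \<le> d / c u" using gs unfolding d_def by simp
        then have cuC: "c u \<le> C"
        proof -
          assume h: "d / C \<le> d / c u"
          show "c u \<le> C"
          proof (rule ccontr)
            assume "\<not> c u \<le> C"
            then have "C < c u" by simp
            then have "d / c u < d / C" using gs(1) dge eps_pos by (intro divide_strict_left_mono) auto
            then show False using h by simp
          qed
        qed
        have "d \<le> \<eta> * exp (- set_cost c S0 / C)" using inv[OF step(2)] gs(1) d_def by blast
        then have "\<epsilon> \<le> \<eta> * exp (- set_cost c S0 / C)" using dge by simp
        then have "ln \<epsilon> \<le> ln (\<eta> * exp (- set_cost c S0 / C))" using eps_pos by simp
        also have "\<dots> = ln \<eta> - set_cost c S0 / C" using eps_pos eps_lt by (simp add: ln_mult)
        finally have "set_cost c S0 / C \<le> ln (\<eta> / \<epsilon>)" using eps_pos eps_lt by (simp add: ln_div)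
        then have c0: "set_cost c S0 \<le> C * ln (\<eta> / \<epsilon>)" using gs(1) by (simp add: pos_divide_le_eq mult.commute)
        have "set_cost c S = set_cost c S0 + c u"
        proof -
          have "finite S0" using SV finV by (auto intro: finite_subset)
          then show ?thesis unfolding set_cost_def using step(1,4) by simp
        qed
        also have "\<dots> \<le> C * (1 + ln (\<eta> / \<epsilon>))" using c0 cuC by (simp add: algebra_simps)
        also have "\<dots> \<le> (1 + \<phi>) * (1 + ln (\<eta> / \<epsilon>)) * C"
          using gs(1) lnpos phi by (simp add: mult_right_mono)
        finally show ?thesis unfolding C_def .
      qed
    qed
    show ?thesis using part1 part2 by blast
  qed
  show ?thesis using d main by blast
qed




definition icA where "icA V L S t = fst (ic_state V L S t)"
definition icN where "icN V L S t = snd (ic_state V L S t)"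

lemma ic_state_Suc':
  "ic_state V L S (Suc t) = (fst (ic_state V L S t) \<union> {u \<in> V - fst (ic_state V L S t). \<exists>v\<in>snd (ic_state V L S t). (v, u) \<in> L},
       {u \<in> V - fst (ic_state V L S t). \<exists>v\<in>snd (ic_state V L S t). (v, u) \<in> L})"
proof -
  obtain A N where e: "ic_state V L S t = (A, N)" by (cases "ic_state V L S t")
  show ?thesis by (simp only: ic_state.simps(2) e Let_def prod.case fst_conv snd_conv)
qed

lemma icA0: "icA V L S 0 = S" and icN0: "icN V L S 0 = S"
  unfolding icA_def icN_def by simp_all

lemma icAS: "icA V L S (Suc t) = icA V L S t \<union> icN V L S (Suc t)"
  and icNS: "icN V L S (Suc t) = {u \<in> V - icA V L S t. \<exists>v\<in>icN V L S t. (v, u) \<in> L}"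
  unfolding icA_def icN_def by (simp_all only: ic_state_Suc' fst_conv snd_conv)

lemma icNA: "icN V L S t \<subseteq> icA V L S t"
  by (induction t) (simp_all only: icA0 icN0 icAS subset_refl Un_upper2)

lemma icAmono: "i \<le> j \<Longrightarrow> icA V L S i \<subseteq> icA V L S j"
proof (induction j)
  case 0 then show ?case by simp
next
  case (Suc j)
  have "icA V L S j \<subseteq> icA V L S (Suc j)" unfolding icAS by blast
  then show ?case using Suc by (auto simp: le_Suc_eq)
qed

definition icR :: "'a set \<Rightarrow> ('a \<times> 'a) set \<Rightarrow> 'a \<Rightarrow> 'a set" where
  "icR V L s = {u. (s, u) \<in> {(v, w). (v, w) \<in> L \<and> w \<in> V}\<^sup>*}"

lemma icAU: "icA V L S t \<subseteq> (\<Union>s\<in>S. icR V L s)"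
proof (induction t)
  case 0
  show ?case
  proof
    fix x assume "x \<in> icA V L S 0"
    then have "x \<in> S" by (simp add: icA0)
    moreover have "x \<in> icR V L x" by (simp add: icR_def)
    ultimately show "x \<in> (\<Union>s\<in>S. icR V L s)" by blast
  qed
next
  case (Suc t)
  have "icN V L S (Suc t) \<subseteq> (\<Union>s\<in>S. icR V L s)"
  proof
    fix u assume "u \<in> icN V L S (Suc t)"
    then obtain v where v: "v \<in> icN V L S t" "(v, u) \<in> L" "u \<in> V" unfolding icNS by blast
    have "v \<in> icA V L S t" using icNA[of V L S t] v(1) by blast
    then have "v \<in> (\<Union>s\<in>S. icR V L s)" using Suc.IH by blast
    then obtain s where s: "s \<in> S" "(s, v) \<in> {(v, w). (v, w) \<in> L \<and> w \<in> V}\<^sup>*" unfolding icR_def by blast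
    have "(v, u) \<in> {(v, w). (v, w) \<in> L \<and> w \<in> V}" using v by simp
    then have "(s, u) \<in> {(v, w). (v, w) \<in> L \<and> w \<in> V}\<^sup>*" using s(2) by (simp add: rtrancl_into_rtrancl)
    then show "u \<in> (\<Union>s\<in>S. icR V L s)" using s unfolding icR_def by blast
  qed
  then show ?case using Suc.IH unfolding icAS by blast
qed

lemma icAN: "v \<in> icA V L S t \<Longrightarrow> \<exists>i\<le>t. v \<in> icN V L S i"
proof (induction t)
  case 0 then show ?case by (simp add: icA0 icN0)
next
  case (Suc t)
  show ?case
  proof (cases "v \<in> icA V L S t")
    case True then obtain i where "i \<le> t" "v \<in> icN V L S i" using Suc.IH by blast
    then show ?thesis using le_SucI by blast
  next
    case False then have "v \<in> icN V L S (Suc t)" using Suc.prems unfolding icAS by blast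
    then show ?thesis by blast
  qed
qed

lemma icstep:
  assumes "v \<in> icA V L S t" "(v, u) \<in> L" "u \<in> V"
  shows "u \<in> icA V L S (Suc t)"
proof -
  from icAN[OF assms(1)] obtain i where i: "i \<le> t" "v \<in> icN V L S i" by blast
  have "u \<in> icA V L S (Suc i)"
  proof (cases "u \<in> icA V L S i")
    case True then show ?thesis unfolding icAS by blast
  next
    case False
    then have "u \<in> icN V L S (Suc i)" unfolding icNS using assms(2,3) i(2) by blast
    then show ?thesis unfolding icAS by blast
  qed
  moreover have "icA V L S (Suc i) \<subseteq> icA V L S (Suc t)" using icAmono[of "Suc i" "Suc t"] i(1) by simp
  ultimately show ?thesis by blast
qed

lemma icreach:
  assumes "s \<in> S" "(s, u) \<in> {(v, w). (v, w) \<in> L \<and> w \<in> V}\<^sup>*"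
  shows "\<exists>t. u \<in> icA V L S t"
  using assms(2)
proof (induction rule: rtrancl_induct)
  case base then show ?case using assms(1) by (intro exI[of _ 0]) (simp add: icA0)
next
  case (step y z)
  from step.IH obtain t where yA: "y \<in> icA V L S t" by blast
  from step.hyps(2) have yz: "(y, z) \<in> L" "z \<in> V" by auto
  have "z \<in> icA V L S (Suc t)" using icstep[OF yA yz] .
  then show ?case by blast
qed

lemma ic_final_eq:
  "ic_final V L S = (\<Union>s\<in>S. icR V L s)"
proof -
  have "ic_final V L S = (\<Union>t. icA V L S t)" by (simp only: ic_final_def icA_def)
  also have "\<dots> = (\<Union>s\<in>S. icR V L s)"
  proof
    show "(\<Union>t. icA V L S t) \<subseteq> (\<Union>s\<in>S. icR V L s)" by (rule UN_least, rule icAU)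
    show "(\<Union>s\<in>S. icR V L s) \<subseteq> (\<Union>t. icA V L S t)"
    proof
      fix u assume "u \<in> (\<Union>s\<in>S. icR V L s)"
      then obtain s where s: "s \<in> S" "u \<in> icR V L s" by blast
      have "(s, u) \<in> {(v, w). (v, w) \<in> L \<and> w \<in> V}\<^sup>*" using s(2) unfolding icR_def by simp
      from icreach[OF s(1) this] obtain t where "u \<in> icA V L S t" by blast
      then show "u \<in> (\<Union>t. icA V L S t)" by blast
    qed
  qed
  finally show ?thesis .
qed

lemma icR_sub: "icR V L s \<subseteq> insert s V"
proof
  fix u assume "u \<in> icR V L s"
  then have "(s, u) \<in> {(v, w). (v, w) \<in> L \<and> w \<in> V}\<^sup>*" unfolding icR_def by simp
  then show "u \<in> insert s V" by (induction rule: rtrancl_induct) auto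
qed

lemma icR_self: "s \<in> icR V L s" unfolding icR_def by simp

lemma ic_final_sub: assumes SV: "S \<subseteq> V" shows "ic_final V L S \<subseteq> V"
proof
  fix u assume "u \<in> ic_final V L S"
  then obtain s where s: "s \<in> S" "u \<in> icR V L s" unfolding ic_final_eq by (rule UN_E)
  have "u \<in> insert s V" using icR_sub[of V L s] s(2) by (rule subsetD)
  then show "u \<in> V" using s(1) SV by auto
qed

lemma ic_final_sup: "S \<subseteq> ic_final V L S"
proof
  fix s assume "s \<in> S"
  then show "s \<in> ic_final V L S" unfolding ic_final_eq using icR_self[of s V L] by (rule UN_I)
qed

lemma ic_final_mono: "A \<subseteq> B \<Longrightarrow> ic_final V L A \<subseteq> ic_final V L B"
  unfolding ic_final_eq by (rule UN_mono[OF _ subset_refl])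

lemma ic_final_submod:
  assumes fin: "finite V" and AB: "A \<subseteq> B" "B \<subseteq> V" and y: "y \<in> V"
  shows "real (card (ic_final V L (B \<union> {y}))) - real (card (ic_final V L B))
       \<le> real (card (ic_final V L (A \<union> {y}))) - real (card (ic_final V L A))"
proof -
  have key: "real (card (ic_final V L (X \<union> {y}))) - real (card (ic_final V L X))
      = real (card (icR V L y - ic_final V L X))" if X: "X \<subseteq> V" for X
  proof -
    have e: "ic_final V L (X \<union> {y}) = ic_final V L X \<union> (icR V L y - ic_final V L X)"
      unfolding ic_final_eq by (simp add: Un_ac)
    have f1: "finite (ic_final V L X)" using finite_subset[OF ic_final_sub[OF X] fin] .
    have f2: "finite (icR V L y - ic_final V L X)" using finite_subset[OF icR_sub[of V L y]] fin by simp
    have "card (ic_final V L (X \<union> {y})) = card (ic_final V L X) + card (icR V L y - ic_final V L X)"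
      unfolding e using f1 f2 by (intro card_Un_disjoint) auto
    then show ?thesis by simp
  qed
  have "card (icR V L y - ic_final V L B) \<le> card (icR V L y - ic_final V L A)"
  proof (rule card_mono)
    show "finite (icR V L y - ic_final V L A)" using finite_subset[OF icR_sub[of V L y]] fin by simp
    show "icR V L y - ic_final V L B \<subseteq> icR V L y - ic_final V L A" using ic_final_mono[OF AB(1)] by blast
  qed
  moreover have "A \<subseteq> V" using AB by blast
  ultimately show ?thesis using key[OF AB(2)] key[of A] by simp
qed

lemma sigma_IC_good:
  assumes inst: "ic_instance V E p"
  shows "good_sigma V (sigma_IC V E p)"
proof -
  have fin: "finite V" using inst unfolding ic_instance_def by auto
  define P where "P = Pi_pmf E False (\<lambda>e. bernoulli_pmf (p e))"
  define f where "f S X = real (card (ic_final V {e \<in> E. X e} S))" for S X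
  have sig: "sigma_IC V E p S = measure_pmf.expectation P (f S)" for S
    unfolding sigma_IC_def P_def f_def by simp
  have bnd: "f S X \<le> real (card V)" if "S \<subseteq> V" for S X
    unfolding f_def using card_mono[OF fin ic_final_sub[OF that]] by simp
  have int: "integrable (measure_pmf P) (f S)" if "S \<subseteq> V" for S
  proof (rule measure_pmf.integrable_const_bound[where B="real (card V)"])
    show "AE x in measure_pmf P. norm (f S x) \<le> real (card V)"
      using bnd[OF that] unfolding f_def by (intro AE_I2) simp
    show "f S \<in> borel_measurable (measure_pmf P)" by simp
  qed
  have nonneg: "\<forall>S\<subseteq>V. 0 \<le> sigma_IC V E p S"
    unfolding sig f_def by (intro allI impI integral_nonneg) simp
  have top: "real (card V) \<le> sigma_IC V E p V"
    unfolding sig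
  proof (rule measure_pmf.integral_ge_const[OF int[OF subset_refl]])
    show "AE x in measure_pmf P. real (card V) \<le> f V x"
    proof (intro AE_I2)
      fix x
      have "card V \<le> card (ic_final V {e \<in> E. x e} V)"
        using card_mono[OF finite_subset[OF ic_final_sub[OF subset_refl] fin] ic_final_sup] .
      then show "real (card V) \<le> f V x" unfolding f_def by simp
    qed
  qed
  have mono: "\<forall>A B. A \<subseteq> B \<longrightarrow> B \<subseteq> V \<longrightarrow> sigma_IC V E p A \<le> sigma_IC V E p B"
  proof (intro allI impI)
    fix A B assume AB: "A \<subseteq> B" "B \<subseteq> V"
    have AV: "A \<subseteq> V" using AB by blast
    show "sigma_IC V E p A \<le> sigma_IC V E p B" unfolding sig
    proof (rule integral_mono[OF int[OF AV] int[OF AB(2)]])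
      fix x
      show "f A x \<le> f B x" unfolding f_def
        using card_mono[OF finite_subset[OF ic_final_sub[OF AB(2)] fin] ic_final_mono[OF AB(1)]] by simp
    qed
  qed
  have submod: "\<forall>A B y. A \<subseteq> B \<longrightarrow> B \<subseteq> V \<longrightarrow> y \<in> V \<longrightarrow>
      sigma_IC V E p (B \<union> {y}) - sigma_IC V E p B \<le> sigma_IC V E p (A \<union> {y}) - sigma_IC V E p A"
  proof (intro allI impI)
    fix A B y assume AB: "A \<subseteq> B" "B \<subseteq> V" and y: "y \<in> V"
    have AV: "A \<subseteq> V" using AB by blast
    have By: "B \<union> {y} \<subseteq> V" and Ay: "A \<union> {y} \<subseteq> V" using AB y by auto
    have "sigma_IC V E p (B \<union> {y}) - sigma_IC V E p B = measure_pmf.expectation P (\<lambda>x. f (B \<union> {y}) x - f B x)"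
      unfolding sig using int[OF By] int[OF AB(2)] by (simp add: Bochner_Integration.integral_diff)
    also have "\<dots> \<le> measure_pmf.expectation P (\<lambda>x. f (A \<union> {y}) x - f A x)"
    proof (rule integral_mono)
      show "integrable (measure_pmf P) (\<lambda>x. f (B \<union> {y}) x - f B x)"
        using int[OF By] int[OF AB(2)] by simp
      show "integrable (measure_pmf P) (\<lambda>x. f (A \<union> {y}) x - f A x)"
        using int[OF Ay] int[OF AV] by simp
      fix x
      show "f (B \<union> {y}) x - f B x \<le> f (A \<union> {y}) x - f A x"
        unfolding f_def using ic_final_submod[OF fin AB y] .
    qed
    also have "\<dots> = sigma_IC V E p (A \<union> {y}) - sigma_IC V E p A"
      unfolding sig using int[OF Ay] int[OF AV] by (simp add: Bochner_Integration.integral_diff)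
    finally show "sigma_IC V E p (B \<union> {y}) - sigma_IC V E p B \<le> sigma_IC V E p (A \<union> {y}) - sigma_IC V E p A" .
  qed
  show ?thesis unfolding good_sigma_def using fin nonneg top mono submod by blast
qed




definition wsum :: "('a \<times> 'a) set \<Rightarrow> ('a \<times> 'a \<Rightarrow> real) \<Rightarrow> 'a set \<Rightarrow> 'a \<Rightarrow> real" where
  "wsum E b A u = (\<Sum>v\<in>{v \<in> A. (v, u) \<in> E}. b (v, u))"

lemma lt_active_Suc':
  "lt_active V E b \<theta> S (Suc t) = lt_active V E b \<theta> S t \<union> {u \<in> V. \<theta> u \<le> wsum E b (lt_active V E b \<theta> S t) u}"
  by (simp only: lt_active.simps(2) Let_def wsum_def)

lemma wsum_mono:
  assumes fin: "finite E" and nn: "\<forall>e\<in>E. 0 \<le> b e" and AB: "A \<subseteq> B"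
  shows "wsum E b A u \<le> wsum E b B u"
proof -
  have "{v \<in> B. (v, u) \<in> E} \<subseteq> fst ` E" by force
  then have f: "finite {v \<in> B. (v, u) \<in> E}" using fin by (rule finite_subset[OF _ finite_imageI])
  show ?thesis unfolding wsum_def
  proof (rule sum_mono2[OF f])
    show "{v \<in> A. (v, u) \<in> E} \<subseteq> {v \<in> B. (v, u) \<in> E}" using AB by blast
    fix v assume "v \<in> {v \<in> B. (v, u) \<in> E} - {v \<in> A. (v, u) \<in> E}"
    then have "(v, u) \<in> E" by blast
    then show "0 \<le> b (v, u)" using nn by blast
  qed
qed

lemma wsum_sum:
  assumes fin: "finite E"
  shows "wsum E b A u = (\<Sum>v\<in>{v. (v, u) \<in> E}. if v \<in> A then b (v, u) else 0)"
proof -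
  have f: "finite {v. (v, u) \<in> E}"
  proof -
    have "{v. (v, u) \<in> E} \<subseteq> fst ` E" by force
    then show ?thesis using fin by (rule finite_subset[OF _ finite_imageI])
  qed
  have e: "{v \<in> A. (v, u) \<in> E} = {v \<in> {v. (v, u) \<in> E}. v \<in> A}" by blast
  show ?thesis unfolding wsum_def e using sum.inter_filter[OF f] by simp
qed

lemma lt_active_mono_t: "i \<le> j \<Longrightarrow> lt_active V E b \<theta> S i \<subseteq> lt_active V E b \<theta> S j"
proof (induction j)
  case 0 then show ?case by simp
next
  case (Suc j)
  have "lt_active V E b \<theta> S j \<subseteq> lt_active V E b \<theta> S (Suc j)" unfolding lt_active_Suc' by (rule Un_upper1)
  then show ?case using Suc by (auto simp: le_Suc_eq)
qed

lemma lt_active_sub: "lt_active V E b \<theta> S t \<subseteq> S \<union> V"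
proof (induction t)
  case 0 then show ?case by simp
next
  case (Suc t) then show ?case unfolding lt_active_Suc' by blast
qed

lemma lt_final_sub: "lt_final V E b \<theta> S \<subseteq> S \<union> V"
  unfolding lt_final_def using lt_active_sub by (rule UN_least)

lemma lt_final_sup: "S \<subseteq> lt_final V E b \<theta> S"
proof -
  have "S = lt_active V E b \<theta> S 0" by simp
  also have "\<dots> \<subseteq> lt_final V E b \<theta> S" unfolding lt_final_def by (rule UN_upper) simp
  finally show ?thesis .
qed

lemma lt_active_mono_SV:
  assumes fin: "finite E" and nn: "\<forall>e\<in>E. 0 \<le> b e" and AB: "A \<subseteq> B" and VV: "V' \<subseteq> V"
  shows "lt_active V' E b \<theta> A t \<subseteq> lt_active V E b \<theta> B t"
proof (induction t)
  case 0 then show ?case using AB by simp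
next
  case (Suc t)
  have "{u \<in> V'. \<theta> u \<le> wsum E b (lt_active V' E b \<theta> A t) u} \<subseteq> {u \<in> V. \<theta> u \<le> wsum E b (lt_active V E b \<theta> B t) u}"
  proof
    fix u assume "u \<in> {u \<in> V'. \<theta> u \<le> wsum E b (lt_active V' E b \<theta> A t) u}"
    then have u: "u \<in> V'" "\<theta> u \<le> wsum E b (lt_active V' E b \<theta> A t) u" by auto
    have "wsum E b (lt_active V' E b \<theta> A t) u \<le> wsum E b (lt_active V E b \<theta> B t) u"
      using wsum_mono[OF fin nn Suc.IH] .
    then show "u \<in> {u \<in> V. \<theta> u \<le> wsum E b (lt_active V E b \<theta> B t) u}" using u VV by auto
  qed
  then show ?case unfolding lt_active_Suc' using Suc.IH by blast
qed

lemma lt_final_mono_S: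
  assumes fin: "finite E" and nn: "\<forall>e\<in>E. 0 \<le> b e" and AB: "A \<subseteq> B"
  shows "lt_final V E b \<theta> A \<subseteq> lt_final V E b \<theta> B"
  unfolding lt_final_def using lt_active_mono_SV[OF fin nn AB subset_refl] by (rule UN_mono[OF subset_refl])

lemma lt_active_cong:
  assumes "\<forall>u\<in>V. \<theta> u = \<theta>' u"
  shows "lt_active V E b \<theta> S t = lt_active V E b \<theta>' S t"
proof (induction t)
  case 0 then show ?case by simp
next
  case (Suc t)
  have "{u \<in> V. \<theta> u \<le> wsum E b (lt_active V E b \<theta> S t) u} = {u \<in> V. \<theta>' u \<le> wsum E b (lt_active V E b \<theta>' S t) u}"
    using assms Suc.IH by auto
  then show ?case unfolding lt_active_Suc' using Suc.IH by simp
qed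

lemma chain_finite:
  assumes "finite X" "X \<subseteq> (\<Union>t. B t)" "\<And>i j. i \<le> j \<Longrightarrow> B i \<subseteq> (B (j::nat) :: 'a set)"
  shows "\<exists>t. X \<subseteq> B t"
  using assms(1,2)
proof (induction X rule: finite_induct)
  case empty then show ?case by simp
next
  case (insert a X)
  then obtain t where t: "X \<subseteq> B t" by blast
  from insert.prems obtain s where s: "a \<in> B s" by blast
  have "X \<subseteq> B (max s t)" using t assms(3)[of t "max s t"] by (meson max.cobounded2 order_trans)
  moreover have "a \<in> B (max s t)" using s assms(3)[of s "max s t"] by (meson max.cobounded1 subsetD)
  ultimately show ?case by blast
qed

lemma lt_rec_pointwise:
  assumes fin: "finite E" and nn: "\<forall>e\<in>E. 0 \<le> b e" and x: "x \<in> V" "x \<notin> S"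
  shows "x \<in> lt_final V E b \<theta> S \<longleftrightarrow> \<theta> x \<le> wsum E b (lt_final (V - {x}) E b \<theta> S) x"
proof -
  define A where "A t = lt_active V E b \<theta> S t" for t
  define B where "B t = lt_active (V - {x}) E b \<theta> S t" for t
  define F' where "F' = lt_final (V - {x}) E b \<theta> S"
  have F'B: "F' = (\<Union>t. B t)" unfolding F'_def B_def lt_final_def by simp
  have AB: "A t = B t" if "x \<notin> A t" for t
    using that
  proof (induction t)
    case 0 then show ?case unfolding A_def B_def by simp
  next
    case (Suc t)
    have xt: "x \<notin> A t" using Suc.prems lt_active_mono_t[of t "Suc t" V E b \<theta> S] unfolding A_def by auto
    then have e: "A t = B t" using Suc.IH by blast
    have "{u \<in> V. \<theta> u \<le> wsum E b (A t) u} = {u \<in> V - {x}. \<theta> u \<le> wsum E b (B t) u}"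
      using Suc.prems e unfolding A_def lt_active_Suc' by auto
    then show ?case using e unfolding A_def B_def lt_active_Suc' by simp
  qed
  have BF: "B t \<subseteq> F'" for t unfolding F'B by (rule UN_upper) simp
  have "x \<in> lt_final V E b \<theta> S \<longleftrightarrow> \<theta> x \<le> wsum E b F' x"
  proof
    assume "x \<in> lt_final V E b \<theta> S"
    then obtain t where t: "x \<in> A t" unfolding lt_final_def A_def by blast
    show "\<theta> x \<le> wsum E b F' x" using t
    proof (induction t)
      case 0 then show ?case using x(2) unfolding A_def by simp
    next
      case (Suc t)
      show ?case
      proof (cases "x \<in> A t")
        case True then show ?thesis using Suc.IH by blast
      next
        case False
        then have e: "A t = B t" using AB by blast
        have "\<theta> x \<le> wsum E b (A t) x" using Suc.prems False unfolding A_def lt_active_Suc' by blast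
        also have "\<dots> \<le> wsum E b F' x" unfolding e using wsum_mono[OF fin nn BF] .
        finally show ?thesis .
      qed
    qed
  next
    assume h: "\<theta> x \<le> wsum E b F' x"
    have fX: "finite {v \<in> F'. (v, x) \<in> E}"
    proof -
      have "{v \<in> F'. (v, x) \<in> E} \<subseteq> fst ` E" by force
      then show ?thesis using fin by (rule finite_subset[OF _ finite_imageI])
    qed
    have "{v \<in> F'. (v, x) \<in> E} \<subseteq> F'" by (rule Collect_subset)
    then have sub: "{v \<in> F'. (v, x) \<in> E} \<subseteq> (\<Union>t. B t)" by (simp only: F'B)
    have Bmono: "B i \<subseteq> B j" if "i \<le> j" for i j unfolding B_def using that by (rule lt_active_mono_t)
    from chain_finite[OF fX sub Bmono] obtain t where t: "{v \<in> F'. (v, x) \<in> E} \<subseteq> B t" by blast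
    have "{v \<in> F'. (v, x) \<in> E} = {v \<in> B t. (v, x) \<in> E}" using t BF by blast
    then have wt: "wsum E b F' x = wsum E b (B t) x" unfolding wsum_def by simp
    show "x \<in> lt_final V E b \<theta> S"
    proof (cases "x \<in> A t")
      case True then show ?thesis unfolding lt_final_def A_def by blast
    next
      case False
      then have e: "A t = B t" using AB by blast
      have "x \<in> A (Suc t)" unfolding A_def lt_active_Suc' using x(1) h wt e unfolding A_def by simp
      then show ?thesis unfolding lt_final_def A_def by blast
    qed
  qed
  then show ?thesis unfolding F'_def .
qed




definition MV :: "'a set \<Rightarrow> ('a \<Rightarrow> real) measure" where
  "MV V = PiM V (\<lambda>_. uniform_measure lborel {0..1::real})"

lemma comp_meas: "x \<in> V \<Longrightarrow> (\<lambda>\<theta>. \<theta> x) \<in> borel_measurable (MV V)"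
proof -
  assume x: "x \<in> V"
  have "(\<lambda>\<theta>. \<theta> x) \<in> MV V \<rightarrow>\<^sub>M uniform_measure lborel {0..1::real}"
    unfolding MV_def using measurable_component_singleton[OF x] by blast
  then show ?thesis by (simp add: measurable_cong_sets[OF refl sets_uniform_measure])
qed

lemma lt_meas:
  assumes fin: "finite E"
  shows "Measurable.pred (MV V) (\<lambda>\<theta>. x \<in> lt_active V E b \<theta> S t)"
proof (induction t arbitrary: x)
  case 0 then show ?case by simp
next
  case (Suc t)
  have e: "(\<lambda>\<theta>. x \<in> lt_active V E b \<theta> S (Suc t)) = (\<lambda>\<theta>. x \<in> lt_active V E b \<theta> S t \<or>
     (x \<in> V \<and> \<theta> x \<le> (\<Sum>v\<in>{v. (v, x) \<in> E}. if v \<in> lt_active V E b \<theta> S t then b (v, x) else 0)))"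
    unfolding lt_active_Suc' wsum_sum[OF fin] by auto
  have g: "(\<lambda>\<theta>. \<Sum>v\<in>{v. (v, x) \<in> E}. if v \<in> lt_active V E b \<theta> S t then b (v, x) else 0) \<in> borel_measurable (MV V)"
  proof (rule borel_measurable_sum)
    fix v
    show "(\<lambda>\<theta>. if v \<in> lt_active V E b \<theta> S t then b (v, x) else 0) \<in> borel_measurable (MV V)"
      using Suc.IH[of v] by measurable
  qed
  show ?case
  proof (cases "x \<in> V")
    case True
    have c: "(\<lambda>\<theta>. \<theta> x) \<in> borel_measurable (MV V)" using comp_meas[OF True] .
    have le: "Measurable.pred (MV V) (\<lambda>\<theta>. \<theta> x \<le> (\<Sum>v\<in>{v. (v, x) \<in> E}. if v \<in> lt_active V E b \<theta> S t then b (v, x) else 0))"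
      unfolding pred_def using borel_measurable_le[OF c g] by simp
    show ?thesis unfolding e using Suc.IH[of x] le True by (intro pred_intros_logic) auto
  next
    case False
    show ?thesis unfolding e using Suc.IH[of x] False by simp
  qed
qed

lemma lt_final_meas:
  assumes fin: "finite E"
  shows "{\<theta> \<in> space (MV V). x \<in> lt_final V E b \<theta> S} \<in> sets (MV V)"
proof -
  have "{\<theta> \<in> space (MV V). x \<in> lt_final V E b \<theta> S} = (\<Union>t. {\<theta> \<in> space (MV V). x \<in> lt_active V E b \<theta> S t})"
    unfolding lt_final_def by blast
  also have "\<dots> \<in> sets (MV V)" using lt_meas[OF fin] by (intro sets.countable_UN'') (auto simp: pred_def)
  finally show ?thesis .
qed

abbreviation UM :: "real measure" where "UM \<equiv> uniform_measure lborel {0..1::real}"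

lemma UM_prob: "prob_space UM"
  by (rule prob_space_uniform_measure) (simp_all add: emeasure_lborel_Icc)

lemma UM_psf: "product_sigma_finite (\<lambda>_. UM)"
  by (rule product_sigma_finite.intro) (rule prob_space_imp_sigma_finite[OF UM_prob])

lemma MV_prob: "prob_space (MV V)"
  unfolding MV_def by (rule prob_space_PiM) (rule UM_prob)

lemma UM_le: assumes "0 \<le> w" "w \<le> 1" shows "measure UM {..w} = w"
proof -
  have "emeasure UM {..w} = emeasure lborel ({0..1} \<inter> {..w}) / emeasure lborel {0..1::real}"
    by (rule emeasure_uniform_measure) auto
  also have "{0..1} \<inter> {..w} = {0..w::real}" using assms by auto
  also have "emeasure lborel {0..w} / emeasure lborel {0..1::real} = ennreal w"
    using assms by (simp add: emeasure_lborel_Icc divide_ennreal_def)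
  finally show ?thesis unfolding measure_def using assms by simp
qed

definition PV :: "('a \<times> 'a) set \<Rightarrow> ('a \<times> 'a \<Rightarrow> real) \<Rightarrow> 'a set \<Rightarrow> 'a \<Rightarrow> 'a set \<Rightarrow> real" where
  "PV E b V x S = measure (MV V) {\<theta> \<in> space (MV V). x \<in> lt_final V E b \<theta> S}"

lemma lt_prob_rec:
  assumes finV: "finite V" and fin: "finite E" and nn: "\<forall>e\<in>E. 0 \<le> b e"
    and x: "x \<in> V" "x \<notin> S" and bnd: "(\<Sum>v\<in>{v. (v, x) \<in> E}. b (v, x)) \<le> 1"
  shows "PV E b V x S = (\<Sum>v\<in>{v. (v, x) \<in> E}. b (v, x) * PV E b (V - {x}) v S)"
proof -
  define V' where "V' = V - {x}"
  have VV: "V = insert x V'" and xV': "x \<notin> V'" and finV': "finite V'" using x finV unfolding V'_def by auto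
  define SetV where "SetV = {\<theta> \<in> space (MV V). x \<in> lt_final V E b \<theta> S}"
  define Fv where "Fv v = {\<theta> \<in> space (MV V'). v \<in> lt_final V' E b \<theta> S}" for v
  define W where "W \<theta> = wsum E b (lt_final V' E b \<theta> S) x" for \<theta>
  have SetV_m: "SetV \<in> sets (MV V)" unfolding SetV_def by (rule lt_final_meas[OF fin])
  have Fv_m: "Fv v \<in> sets (MV V')" for v unfolding Fv_def by (rule lt_final_meas[OF fin])
  interpret MVV: prob_space "MV V" by (rule MV_prob)
  interpret MVV': prob_space "MV V'" by (rule MV_prob)
  interpret U: prob_space UM by (rule UM_prob)
  have Wnn: "0 \<le> W \<theta>" for \<theta> unfolding W_def wsum_def using nn by (intro sum_nonneg) auto
  have Wle: "W \<theta> \<le> 1" for \<theta>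
  proof -
    have "W \<theta> \<le> wsum E b UNIV x" unfolding W_def by (rule wsum_mono[OF fin nn]) simp
    also have "\<dots> = (\<Sum>v\<in>{v. (v, x) \<in> E}. b (v, x))" unfolding wsum_def by simp
    finally show ?thesis using bnd by simp
  qed
  have "PV E b V x S = integral\<^sup>L (MV V) (indicator SetV)"
    unfolding PV_def SetV_def integral_indicator by (simp add: Int_absorb2)
  also have "\<dots> = integral\<^sup>L (PiM (insert x V') (\<lambda>_. UM)) (indicator SetV)"
    unfolding MV_def VV by simp
  also have "\<dots> = (LINT \<theta>'|PiM V' (\<lambda>_. UM). LINT y|UM. indicator SetV (\<theta>'(x := y)))"
  proof (rule product_sigma_finite.product_integral_insert[OF UM_psf finV' xV'])
    show "integrable (PiM (insert x V') (\<lambda>_. UM)) (indicat_real SetV)"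
      using SetV_m MVV.emeasure_finite unfolding MV_def VV
      by (intro integrable_real_indicator) (auto simp: less_top)
  qed
  also have "\<dots> = (LINT \<theta>'|MV V'. W \<theta>')"
    unfolding MV_def[symmetric]
  proof (rule Bochner_Integration.integral_cong[OF refl])
    fix \<theta>' assume th: "\<theta>' \<in> space (MV V')"
    have ind: "indicator SetV (\<theta>'(x := y)) = (indicator {..W \<theta>'} y :: real)" for y
    proof -
      have sp: "\<theta>'(x := y) \<in> space (MV V)"
        using th xV' unfolding MV_def VV space_PiM by (auto simp: PiE_def extensional_def)
      have cg: "lt_final V' E b (\<theta>'(x := y)) S = lt_final V' E b \<theta>' S"
        unfolding lt_final_def using lt_active_cong[of V' "\<theta>'(x := y)" \<theta>'] xV' by auto
      have "x \<in> lt_final V E b (\<theta>'(x := y)) S \<longleftrightarrow> y \<le> W \<theta>'"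
        using lt_rec_pointwise[OF fin nn x, of "\<theta>'(x := y)"] cg unfolding W_def V'_def by simp
      then show ?thesis unfolding SetV_def indicator_def using sp by auto
    qed
    have "(LINT y|UM. indicator SetV (\<theta>'(x := y))) = (LINT y|UM. (indicator {..W \<theta>'} y :: real))"
      using ind by simp
    also have "\<dots> = measure UM {..W \<theta>'}" by (simp add: integral_indicator)
    also have "\<dots> = W \<theta>'" using UM_le[OF Wnn Wle] .
    finally show "(LINT y|UM. indicator SetV (\<theta>'(x := y))) = W \<theta>'" .
  qed
  also have "\<dots> = (LINT \<theta>'|MV V'. (\<Sum>v\<in>{v. (v, x) \<in> E}. b (v, x) * indicator (Fv v) \<theta>'))"
  proof (rule Bochner_Integration.integral_cong[OF refl])
    fix \<theta>' assume th: "\<theta>' \<in> space (MV V')"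
    show "W \<theta>' = (\<Sum>v\<in>{v. (v, x) \<in> E}. b (v, x) * indicator (Fv v) \<theta>')"
      unfolding W_def wsum_sum[OF fin] Fv_def using th by (intro sum.cong) (auto simp: indicator_def)
  qed
  also have "\<dots> = (\<Sum>v\<in>{v. (v, x) \<in> E}. b (v, x) * integral\<^sup>L (MV V') (indicator (Fv v)))"
  proof -
    have "(LINT \<theta>'|MV V'. (\<Sum>v\<in>{v. (v, x) \<in> E}. b (v, x) * indicator (Fv v) \<theta>'))
        = (\<Sum>v\<in>{v. (v, x) \<in> E}. LINT \<theta>'|MV V'. b (v, x) * indicator (Fv v) \<theta>')"
      using Fv_m
      by (intro Bochner_Integration.integral_sum integrable_mult_right integrable_real_indicator) (auto simp: less_top[symmetric] MVV'.emeasure_finite)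
    then show ?thesis by simp
  qed
  also have "\<dots> = (\<Sum>v\<in>{v. (v, x) \<in> E}. b (v, x) * PV E b V' v S)"
    unfolding PV_def Fv_def integral_indicator by (simp add: Int_absorb2)
  finally show ?thesis unfolding V'_def .
qed

lemma PV_bounds: "0 \<le> PV E b V x S" "PV E b V x S \<le> 1"
proof -
  interpret prob_space "MV V" by (rule MV_prob)
  show "0 \<le> PV E b V x S" unfolding PV_def by simp
  show "PV E b V x S \<le> 1" unfolding PV_def by (rule prob_le_1)
qed

lemma PV_in: assumes "x \<in> S" shows "PV E b V x S = 1"
proof -
  interpret prob_space "MV V" by (rule MV_prob)
  have "{\<theta> \<in> space (MV V). x \<in> lt_final V E b \<theta> S} = space (MV V)"
    using lt_final_sup[of S V E b] assms by blast
  then show ?thesis unfolding PV_def using prob_space by simp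
qed

lemma PV_out: assumes "x \<notin> V" "x \<notin> S" shows "PV E b V x S = 0"
proof -
  have e: "{\<theta> \<in> space (MV V). x \<in> lt_final V E b \<theta> S} = {}"
    using lt_final_sub[of V E b _ S] assms by blast
  show ?thesis unfolding PV_def e by simp
qed

lemma PV_mono:
  assumes fin: "finite E" and nn: "\<forall>e\<in>E. 0 \<le> b e" and AB: "A \<subseteq> B"
  shows "PV E b V x A \<le> PV E b V x B"
proof -
  interpret prob_space "MV V" by (rule MV_prob)
  show ?thesis unfolding PV_def
  proof (rule finite_measure_mono)
    show "{\<theta> \<in> space (MV V). x \<in> lt_final V E b \<theta> A} \<subseteq> {\<theta> \<in> space (MV V). x \<in> lt_final V E b \<theta> B}"
      using lt_final_mono_S[OF fin nn AB] by blast
    show "{\<theta> \<in> space (MV V). x \<in> lt_final V E b \<theta> B} \<in> sets (MV V)" by (rule lt_final_meas[OF fin])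
  qed
qed

lemma PV_submod:
  assumes fin: "finite E" and nn: "\<forall>e\<in>E. 0 \<le> b e"
    and finV: "finite V" and bnd: "\<forall>u\<in>V. (\<Sum>v\<in>{v. (v, u) \<in> E}. b (v, u)) \<le> 1"
    and AB: "A \<subseteq> B" and y: "y \<notin> B"
  shows "PV E b V x (B \<union> {y}) - PV E b V x B \<le> PV E b V x (A \<union> {y}) - PV E b V x A"
  using finV bnd
proof (induction "card V" arbitrary: V x rule: less_induct)
  case (less V)
  have monoA: "PV E b V x A \<le> PV E b V x (A \<union> {y})" by (rule PV_mono[OF fin nn]) blast
  have monoAB: "PV E b V x A \<le> PV E b V x B" by (rule PV_mono[OF fin nn AB])
  show ?case
  proof (cases "x \<in> V")
    case False
    show ?thesis
    proof (cases "x \<in> A")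
      case True
      then have "x \<in> B" using AB by blast
      then show ?thesis using True by (simp add: PV_in)
    next
      case xA: False
      show ?thesis
      proof (cases "x \<in> B")
        case True then show ?thesis using monoA by (simp add: PV_in)
      next
        case xB: False
        show ?thesis using xA xB False y by (cases "x = y") (auto simp: PV_in PV_out)
      qed
    qed
  next
    case xV: True
    show ?thesis
    proof (cases "x \<in> A")
      case True
      then have "x \<in> B" using AB by blast
      then show ?thesis using True by (simp add: PV_in)
    next
      case xA: False
      show ?thesis
      proof (cases "x \<in> B")
        case True then show ?thesis using monoA by (simp add: PV_in)
      next
        case xB: False
        show ?thesis
        proof (cases "x = y")
          case True
          then show ?thesis using monoAB by (simp add: PV_in)
        next
          case xy: False
          define V' where "V' = V - {x}"
          have cV': "card V' < card V" unfolding V'_def using xV less.prems(1) card_gt_0_iff[of V] by (auto simp: card_Diff_singleton)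
          have finV': "finite V'" unfolding V'_def using less.prems(1) by simp
          have bnd': "\<forall>u\<in>V'. (\<Sum>v\<in>{v. (v, u) \<in> E}. b (v, u)) \<le> 1" using less.prems(2) unfolding V'_def by simp
          have bx: "(\<Sum>v\<in>{v. (v, x) \<in> E}. b (v, x)) \<le> 1" using less.prems(2) xV by simp
          have rec: "PV E b V x S = (\<Sum>v\<in>{v. (v, x) \<in> E}. b (v, x) * PV E b V' v S)" if "x \<notin> S" for S
            unfolding V'_def by (rule lt_prob_rec[OF less.prems(1) fin nn xV that bx])
          have IH: "PV E b V' v (B \<union> {y}) - PV E b V' v B \<le> PV E b V' v (A \<union> {y}) - PV E b V' v A" for v
            using less.hyps[OF cV' finV' bnd'] .
          have "PV E b V x (B \<union> {y}) - PV E b V x B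
              = (\<Sum>v\<in>{v. (v, x) \<in> E}. b (v, x) * (PV E b V' v (B \<union> {y}) - PV E b V' v B))"
            using rec[of "B \<union> {y}"] rec[of B] xB xy by (simp add: sum_subtractf right_diff_distrib)
          also have "\<dots> \<le> (\<Sum>v\<in>{v. (v, x) \<in> E}. b (v, x) * (PV E b V' v (A \<union> {y}) - PV E b V' v A))"
          proof (rule sum_mono)
            fix v assume "v \<in> {v. (v, x) \<in> E}"
            then have "0 \<le> b (v, x)" using nn by auto
            then show "b (v, x) * (PV E b V' v (B \<union> {y}) - PV E b V' v B) \<le> b (v, x) * (PV E b V' v (A \<union> {y}) - PV E b V' v A)"
              by (rule mult_left_mono[OF IH[of v]])
          qed
          also have "\<dots> = PV E b V x (A \<union> {y}) - PV E b V x A"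
            using rec[of "A \<union> {y}"] rec[of A] xA xy by (simp add: sum_subtractf right_diff_distrib)
          finally show ?thesis .
        qed
      qed
    qed
  qed
qed




lemma sigma_LT_sum:
  assumes finV: "finite V" and fin: "finite E" and SV: "S \<subseteq> V"
  shows "sigma_LT V E b S = (\<Sum>x\<in>V. PV E b V x S)"
proof -
  interpret prob_space "MV V" by (rule MV_prob)
  define F where "F \<theta> = lt_final V E b \<theta> S" for \<theta>
  define Z where "Z x = {\<theta> \<in> space (MV V). x \<in> F \<theta>}" for x
  have Zm: "Z x \<in> sets (MV V)" for x unfolding Z_def F_def by (rule lt_final_meas[OF fin])
  have "sigma_LT V E b S = integral\<^sup>L (MV V) (\<lambda>\<theta>. real (card (F \<theta>)))"
    unfolding sigma_LT_def MV_def F_def by simp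
  also have "\<dots> = integral\<^sup>L (MV V) (\<lambda>\<theta>. \<Sum>x\<in>V. indicator (Z x) \<theta>)"
  proof (rule Bochner_Integration.integral_cong[OF refl])
    fix \<theta> assume th: "\<theta> \<in> space (MV V)"
    have Fs: "F \<theta> \<subseteq> V" unfolding F_def using lt_final_sub[of V E b \<theta> S] SV by blast
    have "(\<Sum>x\<in>V. indicator (Z x) \<theta> :: real) = (\<Sum>x\<in>V. indicator (F \<theta>) x)"
      unfolding Z_def using th by (intro sum.cong) (auto simp: indicator_def)
    also have "\<dots> = (\<Sum>x\<in>V \<inter> F \<theta>. 1)"
      using sum.inter_restrict[OF finV, of "\<lambda>_. (1::real)" "F \<theta>"] by (simp add: indicator_def of_bool_def)
    also have "\<dots> = real (card (V \<inter> F \<theta>))" by simp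
    also have "V \<inter> F \<theta> = F \<theta>" using Fs by blast
    finally show "real (card (F \<theta>)) = (\<Sum>x\<in>V. indicator (Z x) \<theta>)" by simp
  qed
  also have "\<dots> = (\<Sum>x\<in>V. integral\<^sup>L (MV V) (indicator (Z x)))"
    using Zm by (intro Bochner_Integration.integral_sum integrable_real_indicator) (auto simp: less_top[symmetric] emeasure_finite)
  also have "\<dots> = (\<Sum>x\<in>V. PV E b V x S)"
    unfolding PV_def Z_def F_def integral_indicator by (simp add: Int_absorb2)
  finally show ?thesis .
qed

lemma sigma_LT_good:
  assumes inst: "lt_instance V E b"
  shows "good_sigma V (sigma_LT V E b)"
proof -
  have finV: "finite V" and EV: "E \<subseteq> V \<times> V" and nn: "\<forall>e\<in>E. 0 \<le> b e"
    and bnd: "\<forall>u\<in>V. (\<Sum>v\<in>{v. (v, u) \<in> E}. b (v, u)) \<le> 1"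
    using inst unfolding lt_instance_def by auto
  have fin: "finite E" using finite_subset[OF EV] finV by simp
  have sig: "sigma_LT V E b S = (\<Sum>x\<in>V. PV E b V x S)" if "S \<subseteq> V" for S
    using sigma_LT_sum[OF finV fin that] .
  have nonneg: "\<forall>S\<subseteq>V. 0 \<le> sigma_LT V E b S"
  proof (intro allI impI)
    fix S assume "S \<subseteq> V"
    then show "0 \<le> sigma_LT V E b S" unfolding sig[OF \<open>S \<subseteq> V\<close>] by (intro sum_nonneg) (simp add: PV_bounds(1))
  qed
  have top: "real (card V) \<le> sigma_LT V E b V"
    using sig[OF subset_refl] by (simp add: PV_in)
  have mono: "\<forall>A B. A \<subseteq> B \<longrightarrow> B \<subseteq> V \<longrightarrow> sigma_LT V E b A \<le> sigma_LT V E b B"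
  proof (intro allI impI)
    fix A B assume AB: "A \<subseteq> B" "B \<subseteq> V"
    then have "A \<subseteq> V" by blast
    then show "sigma_LT V E b A \<le> sigma_LT V E b B"
      using sig AB PV_mono[OF fin nn AB(1)] by (simp add: sum_mono)
  qed
  have submod: "\<forall>A B y. A \<subseteq> B \<longrightarrow> B \<subseteq> V \<longrightarrow> y \<in> V \<longrightarrow>
      sigma_LT V E b (B \<union> {y}) - sigma_LT V E b B \<le> sigma_LT V E b (A \<union> {y}) - sigma_LT V E b A"
  proof (intro allI impI)
    fix A B y assume AB: "A \<subseteq> B" "B \<subseteq> V" and y: "y \<in> V"
    have AV: "A \<subseteq> V" using AB by blast
    have Ay: "A \<union> {y} \<subseteq> V" and By: "B \<union> {y} \<subseteq> V" using AB y by auto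
    have m: "sigma_LT V E b A \<le> sigma_LT V E b (A \<union> {y})" using mono Ay by blast
    show "sigma_LT V E b (B \<union> {y}) - sigma_LT V E b B \<le> sigma_LT V E b (A \<union> {y}) - sigma_LT V E b A"
    proof (cases "y \<in> B")
      case True
      then have "B \<union> {y} = B" by blast
      then show ?thesis using m by simp
    next
      case False
      have "sigma_LT V E b (B \<union> {y}) - sigma_LT V E b B = (\<Sum>x\<in>V. PV E b V x (B \<union> {y}) - PV E b V x B)"
        using sig[OF By] sig[OF AB(2)] by (simp add: sum_subtractf)
      also have "\<dots> \<le> (\<Sum>x\<in>V. PV E b V x (A \<union> {y}) - PV E b V x A)"
        using PV_submod[OF fin nn finV bnd AB(1) False] by (rule sum_mono)
      also have "\<dots> = sigma_LT V E b (A \<union> {y}) - sigma_LT V E b A"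
        using sig[OF Ay] sig[OF AV] by (simp add: sum_subtractf)
      finally show ?thesis .
    qed
  qed
  show ?thesis unfolding good_sigma_def using finV nonneg top mono submod by blast
qed


theorem theorem2:
  fixes V :: "'a set" and E :: "('a \<times> 'a) set" and q :: "'a \<times> 'a \<Rightarrow> real"
    and \<sigma> :: "'a set \<Rightarrow> real" and c :: "'a \<Rightarrow> real"
    and \<eta> \<epsilon> \<phi> :: real
  assumes model: "(ic_instance V E q \<and> \<sigma> = sigma_IC V E q) \<or> (lt_instance V E q \<and> \<sigma> = sigma_LT V E q)"
    and cost_pos: "\<forall>v\<in>V. c v > 0"
    and eta_le: "\<eta> \<le> real (card V)"
    and eps_pos: "\<epsilon> > 0"
    and eps_lt: "\<epsilon> < \<eta>"
    and phi_pos: "\<phi> > 0"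
  shows "\<exists>\<delta>. 0 < \<delta> \<and> \<delta> < 1 \<and>
    (\<forall>\<sigma>' :: 'a set \<Rightarrow> real.
       (\<forall>S\<subseteq>V. (1 - \<delta>) * \<sigma> S \<le> \<sigma>' S \<and> \<sigma>' S \<le> \<sigma> S) \<longrightarrow>
       (\<exists>S. greedy_output V \<sigma>' c \<eta> \<epsilon> S) \<and>
       (\<forall>S T. greedy_output V \<sigma>' c \<eta> \<epsilon> S \<longrightarrow> T \<subseteq> V \<longrightarrow> \<sigma> T \<ge> \<eta> \<longrightarrow>
          set_cost c S \<le> (1 + \<phi>) * (1 + ln (\<eta> / \<epsilon>)) * set_cost c T))"
  proof -
  have g: "good_sigma V \<sigma>" using model sigma_IC_good sigma_LT_good by blast
  show ?thesis by (rule greedy_abstract[OF g cost_pos eta_le eps_pos eps_lt phi_pos])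
qed

end
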